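(* Let $S$ be a set and let $\emptyset\neq\mathcal{T}\subseteq \mathcal{P}(S)$ contain a countable subfamily separating points of $S$. If $\mathcal{C}(\mathcal{T})\subseteq \mathcal{C}(\mathcal{E})$ for some $\emptyset\neq\mathcal{E}\subseteq \mathcal{P}(S)$, then every $A\in\mathcal{T}$ is of the form \[ A=\bigcup_{n\in\mathbb{N}} E^{*}_{n,1}\cap\cdots\cap E^{*}_{n,k_{n}}, \] where $k_n\in\mathbb{N}$, $E_{n,j}\in\mathcal{E}$, and each $E_{n,j}^{*}$ is either $E_{n,j}$ or its complement $S\setminus E_{n,j}$.
   Context: $C(S)$ is the set of countable subsets of $S$; $N_A(M)=|A\cap M|$; for nonempty $\mathcal{T}\subseteq\mathcal{P}(S)$, $\mathcal{C}(\mathcal{T})=\sigma(N_A\mid A\in\mathcal{T})$. A family separates points of $S$ if for any distinct $x,y\in S$ it contains a set containing exactly one of $x,y$. *)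

theory Defs
  imports "HOL-Analysis.Analysis" "HOL-Library.Extended_Nat"
begin

definition countable_subsets :: "'a set \<Rightarrow> 'a set set" where
  "countable_subsets S = {M. M \<subseteq> S \<and> countable M}"

definition count_in :: "'a set \<Rightarrow> 'a set \<Rightarrow> enat" where
  "count_in A M = (if finite (A \<inter> M) then enat (card (A \<inter> M)) else \<infinity>)"

text \<open>\<C>(T) = \<sigma>(N_A | A \<in> T) on C(S), with the discrete sigma algebra on enat.\<close>
definition gen_sigma :: "'a set \<Rightarrow> 'a set set \<Rightarrow> 'a set set set" where
  "gen_sigma S T = sigma_sets (countable_subsets S)
     {{M \<in> countable_subsets S. count_in A M \<in> B} | A B. A \<in> T}"

definition separates_points :: "'a set \<Rightarrow> 'a set set \<Rightarrow> bool" where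
  "separates_points S F \<longleftrightarrow>
     (\<forall>x\<in>S. \<forall>y\<in>S. x \<noteq> y \<longrightarrow> (\<exists>B\<in>F. (x \<in> B) \<noteq> (y \<in> B)))"

end

theory Submission
  imports Defs
begin

lemma count_in_single: "count_in e {x} = (if x \<in> e then 1 else 0)"
  by (auto simp: count_in_def one_enat_def zero_enat_def)

lemma count_in_inf: "infinite (e \<inter> M) \<Longrightarrow> count_in e M = \<infinity>"
  by (simp add: count_in_def)

lemma count_in_zero: "count_in e M = 0 \<longleftrightarrow> e \<inter> M = {}"
  by (auto simp: count_in_def zero_enat_def)

lemma inv_lemma:
  assumes "G \<in> sigma_sets \<Omega> {{M \<in> \<Omega>. count_in A M \<in> B} | A B. A \<in> E}"
  shows "\<exists>E0 \<subseteq> E. countable E0 \<and> (\<forall>M\<in>\<Omega>. \<forall>M'\<in>\<Omega>.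
           (\<forall>e\<in>E0. count_in e M = count_in e M') \<longrightarrow> (M\<in>G \<longleftrightarrow> M'\<in>G))"
  using assms
proof induct
  case (Basic a)
  then obtain A B where a: "a = {M \<in> \<Omega>. count_in A M \<in> B}" "A \<in> E" by blast
  show ?case by (rule exI[of _ "{A}"]) (auto simp: a)
next
  case Empty
  show ?case by (rule exI[of _ "{}"]) auto
next
  case (Compl a)
  then show ?case by blast
next
  case (Union a)
  then have "\<forall>i. \<exists>E0 \<subseteq> E. countable E0 \<and> (\<forall>M\<in>\<Omega>. \<forall>M'\<in>\<Omega>.
           (\<forall>e\<in>E0. count_in e M = count_in e M') \<longrightarrow> (M\<in>a i \<longleftrightarrow> M'\<in>a i))" by blast
  then obtain Ef where Ef: "\<And>i. Ef i \<subseteq> E \<and> countable (Ef i) \<and> (\<forall>M\<in>\<Omega>. \<forall>M'\<in>\<Omega>.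
           (\<forall>e\<in>Ef i. count_in e M = count_in e M') \<longrightarrow> (M\<in>a i \<longleftrightarrow> M'\<in>a i))"
    by metis
  show ?case
  proof (rule exI[of _ "\<Union>i. Ef i"], intro conjI ballI impI)
    show "(\<Union>i. Ef i) \<subseteq> E" using Ef by blast
    show "countable (\<Union>i. Ef i)" using Ef by blast
    fix M M' assume MM: "M \<in> \<Omega>" "M' \<in> \<Omega>" and eq: "\<forall>e\<in>(\<Union>i. Ef i). count_in e M = count_in e M'"
    have "\<And>i. M \<in> a i \<longleftrightarrow> M' \<in> a i"
    proof -
      fix i
      have "\<forall>e\<in>Ef i. count_in e M = count_in e M'" using eq by blast
      then show "M \<in> a i \<longleftrightarrow> M' \<in> a i" using Ef[of i] MM by blast
    qed
    then show "M \<in> \<Union> (range a) \<longleftrightarrow> M' \<in> \<Union> (range a)" by blast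
  qed
qed


theorem corollary3p6:
  fixes S :: "'a set" and T E :: "'a set set"
  assumes "T \<noteq> {}" and "T \<subseteq> Pow S"
    and "\<exists>T0\<subseteq>T. countable T0 \<and> separates_points S T0"
    and "E \<noteq> {}" and "E \<subseteq> Pow S"
    and "gen_sigma S T \<subseteq> gen_sigma S E"
  shows "\<forall>A\<in>T. \<exists>(k::nat \<Rightarrow> nat) (F::nat \<Rightarrow> nat \<Rightarrow> 'a set) (c::nat \<Rightarrow> nat \<Rightarrow> bool).
           (\<forall>n. k n \<ge> 1 \<and> (\<forall>j\<in>{1..k n}. F n j \<in> E)) \<and>
           A = (\<Union>n. \<Inter>j\<in>{1..k n}. (if c n j then F n j else S - F n j))"
proof
  fix A assume AT: "A \<in> T"
  define \<Omega> where "\<Omega> = countable_subsets S"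
  define G where "G = (\<lambda>A'. {M\<in>\<Omega>. count_in A' M \<in> {0}})"
  have GE: "G A' \<in> gen_sigma S E" if "A' \<in> T" for A'
  proof -
    have "G A' \<in> gen_sigma S T" unfolding G_def \<Omega>_def gen_sigma_def
      by (rule sigma_sets.Basic) (use that in blast)
    then show ?thesis using assms(6) by blast
  qed
  have "\<forall>A'\<in>T. \<exists>E0 \<subseteq> E. countable E0 \<and> (\<forall>M\<in>\<Omega>. \<forall>M'\<in>\<Omega>.
           (\<forall>e\<in>E0. count_in e M = count_in e M') \<longrightarrow> (M\<in>G A' \<longleftrightarrow> M'\<in>G A'))"
  proof
    fix A' assume "A' \<in> T"
    from GE[OF this] show "\<exists>E0 \<subseteq> E. countable E0 \<and> (\<forall>M\<in>\<Omega>. \<forall>M'\<in>\<Omega>.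
           (\<forall>e\<in>E0. count_in e M = count_in e M') \<longrightarrow> (M\<in>G A' \<longleftrightarrow> M'\<in>G A'))"
      unfolding gen_sigma_def \<Omega>_def by (rule inv_lemma)
  qed
  then obtain Ef where Ef: "\<And>A'. A' \<in> T \<Longrightarrow> Ef A' \<subseteq> E \<and> countable (Ef A') \<and> (\<forall>M\<in>\<Omega>. \<forall>M'\<in>\<Omega>.
           (\<forall>e\<in>Ef A'. count_in e M = count_in e M') \<longrightarrow> (M\<in>G A' \<longleftrightarrow> M'\<in>G A'))"
    by metis
  have EfE: "Ef A' \<subseteq> E" if "A' \<in> T" for A' using Ef[OF that] by (rule conjunct1)
  have Efc: "countable (Ef A')" if "A' \<in> T" for A' using Ef[OF that] by (metis conjunct1 conjunct2)
  have Efi: "\<And>M M'. M\<in>\<Omega> \<Longrightarrow> M'\<in>\<Omega> \<Longrightarrow>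
           (\<forall>e\<in>Ef A'. count_in e M = count_in e M') \<Longrightarrow> (M\<in>G A' \<longleftrightarrow> M'\<in>G A')"
    if "A' \<in> T" for A' using Ef[OF that] by (metis conjunct2)
  obtain T0 where T0: "T0 \<subseteq> T" "countable T0" "separates_points S T0" using assms(3) by blast
  obtain e0 where e0: "e0 \<in> E" using assms(4) by blast
  define E0 where "E0 = Ef A \<union> (\<Union>A'\<in>T0. Ef A') \<union> {e0}"
  have E0c: "countable E0" unfolding E0_def
    using Efc[OF AT] Efc T0(1,2) by (intro countable_Un countable_UN countable_insert) auto
  have E0E: "E0 \<subseteq> E" unfolding E0_def using EfE[OF AT] EfE T0(1) e0 by auto
  have E0ne: "E0 \<noteq> {}" unfolding E0_def by blast
  define f where "f = from_nat_into E0"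
  have rf: "range f = E0" unfolding f_def using E0c E0ne by (simp add: range_from_nat_into)
  have fE: "f j \<in> E" for j using rf E0E by blast
  have fS: "f j \<subseteq> S" for j using fE assms(5) by blast
  have AS: "A \<subseteq> S" using AT assms(2) by blast
  have single: "{x} \<in> \<Omega>" if "x \<in> S" for x using that by (simp add: \<Omega>_def countable_subsets_def)
  have sep: "x = y" if xy: "x \<in> S" "y \<in> S" "\<forall>j. x \<in> f j \<longleftrightarrow> y \<in> f j" for x y
  proof (rule ccontr)
    assume "x \<noteq> y"
    then obtain B where B: "B \<in> T0" "(x \<in> B) \<noteq> (y \<in> B)" using T0(3) xy(1,2)
      unfolding separates_points_def by blast
    have BT: "B \<in> T" using B T0 by blast
    have "\<forall>e\<in>Ef B. count_in e {x} = count_in e {y}"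
    proof
      fix e assume "e \<in> Ef B"
      then have "e \<in> E0" unfolding E0_def using B by blast
      then obtain j where "e = f j" using rf by blast
      then show "count_in e {x} = count_in e {y}" using xy(3) by (simp add: count_in_single)
    qed
    then have "{x} \<in> G B \<longleftrightarrow> {y} \<in> G B" using Efi[OF BT] single xy by blast
    then show False using B(2) single xy by (auto simp: G_def count_in_zero)
  qed
  define cell where "cell = (\<lambda>x n. {z\<in>S. \<forall>j<n. z \<in> f j \<longleftrightarrow> x \<in> f j})"
  have claim: "\<exists>n. cell x n \<subseteq> A" if xA: "x \<in> A" for x
  proof (rule ccontr)
    assume "\<not> ?thesis"
    then have "\<forall>n. \<exists>y. y \<in> cell x n - A" by blast
    then obtain y where y: "\<And>n. y n \<in> cell x n - A" by metis
    have yS: "y n \<in> S" for n using y[of n] unfolding cell_def by blast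
    have yA: "y n \<notin> A" for n using y by blast
    have yc: "y n \<in> f j \<longleftrightarrow> x \<in> f j" if "j < n" for n j using y[of n] that unfolding cell_def by blast
    show False
    proof (cases "finite (range y)")
      case True
      then obtain z where "z \<in> range y" "infinite (y -` {z})"
        using inf_img_fin_dom'[OF True] by auto
      then have zS: "z \<in> S" and zA: "z \<notin> A" using yS yA by auto
      have "\<forall>j. z \<in> f j \<longleftrightarrow> x \<in> f j"
      proof
        fix j
        from \<open>infinite (y -` {z})\<close> obtain n where "n \<in> y -` {z}" "n > j"
          using infinite_nat_iff_unbounded by blast
        then show "z \<in> f j \<longleftrightarrow> x \<in> f j" using yc[of j n] by auto
      qed
      then have "z = x" using sep zS xA AS by blast
      then show False using zA xA by blast
    next
      case False
      define Y where "Y = range y"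
      have Yinf: "infinite Y" using False Y_def by simp
      have M1: "insert x Y \<in> \<Omega>" using yS xA AS unfolding \<Omega>_def countable_subsets_def Y_def by auto
      have M2: "Y \<in> \<Omega>" using yS unfolding \<Omega>_def countable_subsets_def Y_def by auto
      have eq: "\<forall>e\<in>Ef A. count_in e (insert x Y) = count_in e Y"
      proof
        fix e assume "e \<in> Ef A"
        then have "e \<in> E0" unfolding E0_def by blast
        then obtain j where ej: "e = f j" using rf by blast
        show "count_in e (insert x Y) = count_in e Y"
        proof (cases "x \<in> e")
          case False
          then have "e \<inter> insert x Y = e \<inter> Y" by blast
          then show ?thesis by (simp add: count_in_def)
        next
          case True
          have "Y = y ` {..j} \<union> y ` {j<..}" unfolding Y_def by fastforce
          then have "infinite (y ` {j<..})" using Yinf by auto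
          moreover have "y ` {j<..} \<subseteq> e \<inter> Y" using yc True ej unfolding Y_def by auto
          ultimately have inf: "infinite (e \<inter> Y)" using finite_subset by blast
          then have "infinite (e \<inter> insert x Y)" using finite_subset[of "e \<inter> Y" "e \<inter> insert x Y"] by blast
          then show ?thesis using inf by (simp add: count_in_inf)
        qed
      qed
      then have "insert x Y \<in> G A \<longleftrightarrow> Y \<in> G A" using Efi[OF AT] M1 M2 by blast
      moreover have "A \<inter> Y = {}" using yA Y_def by auto
      ultimately show False using M1 M2 xA by (auto simp: G_def count_in_zero)
    qed
  qed
  have cell_mono: "cell x m \<subseteq> cell x n" if "n \<le> m" for x n m
    using that unfolding cell_def by auto
  have claim1: "\<exists>n\<ge>1. cell x n \<subseteq> A" if xA: "x \<in> A" for x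
  proof -
    obtain n where "cell x n \<subseteq> A" using claim[OF xA] by blast
    then show ?thesis using cell_mono[of n "Suc n" x] by (intro exI[of _ "Suc n"]) auto
  qed
  define D where "D = (\<lambda>(n::nat) bs. {z\<in>S. \<forall>j<n. z \<in> f j \<longleftrightarrow> bs ! j})"
  define good where "good = (\<lambda>(n::nat) (bs::bool list). n \<ge> 1 \<and> length bs = n \<and> D n bs \<subseteq> A)"
  define p where "p = (\<lambda>i. (from_nat i :: nat \<times> bool list))"
  define k where "k = (\<lambda>i. if good (fst (p i)) (snd (p i)) then fst (p i) else 2)"
  define F where "F = (\<lambda>i (j::nat). if good (fst (p i)) (snd (p i)) then f (j - 1) else e0)"
  define c where "c = (\<lambda>i (j::nat). if good (fst (p i)) (snd (p i)) then snd (p i) ! (j - 1) else j = 1)"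
  have term_good: "(\<Inter>j\<in>{1..k i}. (if c i j then F i j else S - F i j)) = D (fst (p i)) (snd (p i))"
    if g: "good (fst (p i)) (snd (p i))" for i
  proof -
    obtain n bs where nb: "p i = (n, bs)" by fastforce
    have n1: "n \<ge> 1" using g nb unfolding good_def by auto
    have "(\<Inter>j\<in>{1..n}. (if bs ! (j-1) then f (j-1) else S - f (j-1))) = D n bs"
    proof (rule set_eqI)
      fix z
      have "z \<in> (\<Inter>j\<in>{1..n}. (if bs ! (j-1) then f (j-1) else S - f (j-1))) \<longleftrightarrow>
            (\<forall>j\<in>{1..n}. z \<in> (if bs ! (j-1) then f (j-1) else S - f (j-1)))" by blast
      also have "\<dots> \<longleftrightarrow> (\<forall>j<n. z \<in> (if bs ! j then f j else S - f j))"
      proof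
        assume h: "\<forall>j\<in>{1..n}. z \<in> (if bs ! (j-1) then f (j-1) else S - f (j-1))"
        show "\<forall>j<n. z \<in> (if bs ! j then f j else S - f j)"
        proof (intro allI impI)
          fix j assume "j < n"
          then show "z \<in> (if bs ! j then f j else S - f j)" using h[rule_format, of "Suc j"] by auto
        qed
      next
        assume h: "\<forall>j<n. z \<in> (if bs ! j then f j else S - f j)"
        show "\<forall>j\<in>{1..n}. z \<in> (if bs ! (j-1) then f (j-1) else S - f (j-1))"
        proof
          fix j assume "j \<in> {1..n}"
          then have "j - 1 < n" by auto
          then show "z \<in> (if bs ! (j-1) then f (j-1) else S - f (j-1))" using h by blast
        qed
      qed
      also have "\<dots> \<longleftrightarrow> z \<in> D n bs"
      proof
        assume h: "\<forall>j<n. z \<in> (if bs ! j then f j else S - f j)"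
        have "z \<in> S" using h[rule_format, of 0] n1 fS by (auto split: if_splits)
        then show "z \<in> D n bs" using h unfolding D_def by (auto split: if_splits)
      next
        assume "z \<in> D n bs"
        then show "\<forall>j<n. z \<in> (if bs ! j then f j else S - f j)" unfolding D_def by auto
      qed
      finally show "z \<in> (\<Inter>j\<in>{1..n}. (if bs ! (j-1) then f (j-1) else S - f (j-1))) \<longleftrightarrow> z \<in> D n bs" .
    qed
    then show ?thesis using g nb unfolding k_def F_def c_def by simp
  qed
  have term_bad: "(\<Inter>j\<in>{1..k i}. (if c i j then F i j else S - F i j)) = {}"
    if g: "\<not> good (fst (p i)) (snd (p i))" for i
  proof -
    have "{1..(2::nat)} = {1,2}" by auto
    then show ?thesis using g unfolding k_def F_def c_def by auto
  qed
  show "\<exists>(k::nat \<Rightarrow> nat) (F::nat \<Rightarrow> nat \<Rightarrow> 'a set) (c::nat \<Rightarrow> nat \<Rightarrow> bool).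
           (\<forall>n. k n \<ge> 1 \<and> (\<forall>j\<in>{1..k n}. F n j \<in> E)) \<and>
           A = (\<Union>n. \<Inter>j\<in>{1..k n}. (if c n j then F n j else S - F n j))"
  proof (intro exI conjI allI)
    fix i
    show "k i \<ge> 1" unfolding k_def good_def by auto
    show "\<forall>j\<in>{1..k i}. F i j \<in> E" unfolding F_def using fE e0 by auto
  next
    show "A = (\<Union>i. \<Inter>j\<in>{1..k i}. (if c i j then F i j else S - F i j))"
    proof
      show "A \<subseteq> (\<Union>i. \<Inter>j\<in>{1..k i}. (if c i j then F i j else S - F i j))"
      proof
        fix x assume xA: "x \<in> A"
        obtain n where n: "n \<ge> 1" "cell x n \<subseteq> A" using claim1 xA by blast
        define bs where "bs = map (\<lambda>j. x \<in> f j) [0..<n]"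
        have Dc: "D n bs = cell x n" unfolding D_def cell_def bs_def by auto
        have g: "good n bs" unfolding good_def using n Dc by (simp add: bs_def)
        define i where "i = to_nat (n, bs)"
        have pi: "p i = (n, bs)" unfolding p_def i_def by simp
        have "x \<in> D n bs" using Dc xA AS unfolding cell_def by auto
        then have "x \<in> (\<Inter>j\<in>{1..k i}. (if c i j then F i j else S - F i j))"
          using term_good[of i] g pi by simp
        then show "x \<in> (\<Union>i. \<Inter>j\<in>{1..k i}. (if c i j then F i j else S - F i j))" by blast
      qed
    next
      show "(\<Union>i. \<Inter>j\<in>{1..k i}. (if c i j then F i j else S - F i j)) \<subseteq> A"
      proof (rule UN_least)
        fix i
        show "(\<Inter>j\<in>{1..k i}. (if c i j then F i j else S - F i j)) \<subseteq> A"
        proof (cases "good (fst (p i)) (snd (p i))")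
          case True
          then show ?thesis using term_good[OF True] unfolding good_def by auto
        next
          case False
          then show ?thesis using term_bad[OF False] by simp
        qed
      qed
    qed
  qed
qed

end
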